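(* Consider the $n$-order direct filter, for $i=1,\dots,m$, \[ \begin{cases} x_{i}^{(n-1)} = -\sum_{k=1}^{n-1}\gamma_{ik}x_{i}^{(n-k-1)}+\gamma_{in}(b_{i}-\hat{b}_{i}),\\ \dot{\hat{b}}_{i} = -S(\omega_{m}-\hat{\eta})b_{i}+x_{i},\\ \dot{\hat{\eta}} = \Gamma_{d}\sum_{i=1}^{m}S(b_{i})\upsilon_{i}, \end{cases} \qquad \upsilon_{i}=B_{di}^{T}P_{di}z_{i}, \] under the assumptions that at least two of the measured vectors $b_i$ are non-collinear, and that the gyro bias $\eta$ is bounded and constant ($\dot\eta=0$) and the measured angular velocity $\omega_m(\cdot)$ (hence $\omega(\cdot)$) is bounded. Then the errors $\tilde{b}_{i}=b_{i}-\hat{b}_{i}$, $i=1,\dots,m$, and $\tilde{\eta}=\eta-\hat{\eta}$ converge globally asymptotically to zero.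
   Context: A rigid body has attitude $R\in SO(3)$ with $\dot R=RS(\omega)$, where $\omega$ is the body angular velocity and $S(x)$ is the skew-symmetric matrix with $S(x)y=x\times y$. Given constant inertial vectors $r_i$, $i=1,\dots,m$, the body-frame measurements are $b_i=R^Tr_i$, so $\dot b_i=-S(\omega)b_i$. The rate gyro measures $\omega_m=\omega+\eta$ with unknown bias $\eta$, giving $\dot b_i=-S(\omega_m-\eta)b_i$, $\dot\eta=0$. For each $i$, $\Upsilon_i=(\gamma_{i1},\dots,\gamma_{in})\in\mathbb{R}^n$ is chosen so that the polynomial $s^n+\sum_{k=1}^n\gamma_{ik}s^{n-k}$ is Hurwitz; $x_i^{(j)}$ denotes the $j$-th time derivative of $x_i\in\mathbb{R}^3$. Set $z_i=[x_i^T,\dot x_i^T,\dots,x_i^{(n-1)T}]^T\in\mathbb{R}^{3n}$, $A_{di}=A_{\Upsilon_i}\otimes I_3$ where $A_{\Upsilon_i}$ is the $n\times n$ companion matrix (ones on the superdiagonal, last row $(-\gamma_{in},-\gamma_{i,n-1},\dots,-\gamma_{i1})$), $B_{di}=\gamma_{in}e_n\otimes I_3$ with $e_n=(0,\dots,0,1)^T$, and $P_{di}$ the symmetric positive definite solution of $A_{di}^TP_{di}+P_{di}A_{di}=-Q_{di}$ for a given symmetric positive definite $Q_{di}$. $\Gamma_d$ is a positive definite diagonal gain matrix. *)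

theory Defs
  imports "HOL-Analysis.Analysis" "HOL-Analysis.Cross3"
begin

definition skew :: "real^3 \<Rightarrow> real^3^3" where
  "skew x = matrix (\<lambda>y. cross3 x y)"

definition hurwitz_coeffs :: "nat \<Rightarrow> (nat \<Rightarrow> real) \<Rightarrow> bool" where
  "hurwitz_coeffs n g \<longleftrightarrow>
     (\<forall>s::complex. s ^ n + (\<Sum>k=1..n. complex_of_real (g k) * s ^ (n - k)) = 0 \<longrightarrow> Re s < 0)"

text \<open>Companion matrix A_Upsilon (n x n, 0-based indices j,l < n): ones on the
  superdiagonal, last row (-g n, -g (n-1), ..., -g 1).\<close>
definition companion :: "nat \<Rightarrow> (nat \<Rightarrow> real) \<Rightarrow> nat \<Rightarrow> nat \<Rightarrow> real" where
  "companion n g j l = (if j + 1 < n then (if l = j + 1 then 1 else 0) else - g (n - l))"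

text \<open>A 3n x 3n (resp. 3n x 3) real matrix is represented by its 3 x 3 blocks,
  indexed by block indices j,l < n.  A_d = A_Upsilon (Kronecker) I_3.\<close>
definition Ad :: "nat \<Rightarrow> (nat \<Rightarrow> real) \<Rightarrow> nat \<Rightarrow> nat \<Rightarrow> real^3^3" where
  "Ad n g j l = companion n g j l *\<^sub>R mat 1"

text \<open>B_d = g n e_n (Kronecker) I_3, a 3n x 3 matrix given by its blocks j < n.\<close>
definition Bd :: "nat \<Rightarrow> (nat \<Rightarrow> real) \<Rightarrow> nat \<Rightarrow> real^3^3" where
  "Bd n g j = (if j = n - 1 then g n *\<^sub>R mat 1 else 0)"

definition blk_transpose :: "(nat \<Rightarrow> nat \<Rightarrow> real^3^3) \<Rightarrow> nat \<Rightarrow> nat \<Rightarrow> real^3^3" where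
  "blk_transpose M j l = transpose (M l j)"

definition blk_mult :: "nat \<Rightarrow> (nat \<Rightarrow> nat \<Rightarrow> real^3^3) \<Rightarrow> (nat \<Rightarrow> nat \<Rightarrow> real^3^3)
    \<Rightarrow> nat \<Rightarrow> nat \<Rightarrow> real^3^3" where
  "blk_mult n M N j l = (\<Sum>p<n. M j p ** N p l)"

definition blk_symmetric :: "nat \<Rightarrow> (nat \<Rightarrow> nat \<Rightarrow> real^3^3) \<Rightarrow> bool" where
  "blk_symmetric n M \<longleftrightarrow> (\<forall>j<n. \<forall>l<n. M l j = transpose (M j l))"

definition blk_quad :: "nat \<Rightarrow> (nat \<Rightarrow> nat \<Rightarrow> real^3^3) \<Rightarrow> (nat \<Rightarrow> real^3) \<Rightarrow> real" where
  "blk_quad n M z = (\<Sum>j<n. \<Sum>l<n. z j \<bullet> (M j l *v z l))"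

definition blk_posdef :: "nat \<Rightarrow> (nat \<Rightarrow> nat \<Rightarrow> real^3^3) \<Rightarrow> bool" where
  "blk_posdef n M \<longleftrightarrow> (\<forall>z. (\<exists>j<n. z j \<noteq> 0) \<longrightarrow> 0 < blk_quad n M z)"

definition lyapunov_eq :: "nat \<Rightarrow> (nat \<Rightarrow> nat \<Rightarrow> real^3^3) \<Rightarrow> (nat \<Rightarrow> nat \<Rightarrow> real^3^3)
    \<Rightarrow> (nat \<Rightarrow> nat \<Rightarrow> real^3^3) \<Rightarrow> bool" where
  "lyapunov_eq n A P Q \<longleftrightarrow>
     (\<forall>j<n. \<forall>l<n. blk_mult n (blk_transpose A) P j l + blk_mult n P A j l = - Q j l)"

definition upsilon :: "nat \<Rightarrow> (nat \<Rightarrow> real) \<Rightarrow> (nat \<Rightarrow> nat \<Rightarrow> real^3^3) \<Rightarrow> (nat \<Rightarrow> real^3) \<Rightarrow> real^3" where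
  "upsilon n g P z = (\<Sum>j<n. transpose (Bd n g j) *v (\<Sum>l<n. P j l *v z l))"

definition diag_posdef :: "real^3^3 \<Rightarrow> bool" where
  "diag_posdef G \<longleftrightarrow> (\<forall>a b. a \<noteq> b \<longrightarrow> G $ a $ b = 0) \<and> (\<forall>a. 0 < G $ a $ a)"

end

theory Submission
  imports Defs
begin

unbundle cross3_syntax





lemma skew_mv: "skew x *v y = x \<times> y"
proof -
  have "Vector_Spaces.linear (*s) (*s) (cross3 x)"
    using bilinear_cross by (simp add: bilinear_def linear_def scalar_mult_eq_scaleR)
  then show ?thesis unfolding skew_def by (rule matrix_works)
qed

lemma vm_skew: "y v* skew x = y \<times> x"
proof -
  have "(y v* skew x) $ k = (y \<times> x) $ k" for k
  proof -
    have "(y v* skew x) $ k = (x \<times> axis k 1) \<bullet> y"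
      unfolding vector_matrix_mult_def skew_def matrix_def inner_vec_def by (simp add: mult.commute)
    also have "\<dots> = (y \<times> x) \<bullet> axis k 1" by (rule cross_triple[symmetric])
    also have "\<dots> = (y \<times> x) $ k" by (simp add: inner_axis)
    finally show ?thesis .
  qed
  then show ?thesis by (simp add: vec_eq_iff)
qed

lemma bb_cross: "bounded_bilinear cross3"
  using bilinear_conv_bounded_bilinear bilinear_cross by blast

lemma vd_cross:
  assumes "(f has_vector_derivative f') (at x within s)" "(g has_vector_derivative g') (at x within s)"
  shows "((\<lambda>t. f t \<times> g t) has_vector_derivative (f x \<times> g' + f' \<times> g x)) (at x within s)"
  using bounded_bilinear.has_vector_derivative[OF bb_cross assms] .

lemma vd_inner:
  assumes "(f has_vector_derivative f') (at x within s)" "(g has_vector_derivative g') (at x within s)"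
  shows "((\<lambda>t. f t \<bullet> g t) has_vector_derivative (f x \<bullet> g' + f' \<bullet> g x)) (at x within s)"
  using bounded_bilinear.has_vector_derivative[OF bounded_bilinear_inner assms] .

lemma vd_mv:
  fixes M :: "real^'n^'m"
  assumes "(f has_vector_derivative f') F"
  shows "((\<lambda>t. M *v f t) has_vector_derivative M *v f') F"
  using bounded_linear.has_vector_derivative[OF _ assms, of "\<lambda>x. M *v x"]
  by (simp add: linear_conv_bounded_linear matrix_vector_mul_linear)

lemma lin_vm: "linear (\<lambda>M::real^'m^'n. r v* M)"
  by (rule linearI) (simp_all add: vector_matrix_mult_def vec_eq_iff sum.distrib sum_distrib_left algebra_simps)

lemma vd_bmeas:
  fixes R :: "real \<Rightarrow> real^3^3"
  assumes "(R has_vector_derivative (R t ** skew w)) (at t within s)"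
  shows "((\<lambda>t. transpose (R t) *v r) has_vector_derivative - (w \<times> (transpose (R t) *v r))) (at t within s)"
proof -
  have "((\<lambda>t. r v* R t) has_vector_derivative r v* (R t ** skew w)) (at t within s)"
  proof -
    have bl: "bounded_linear (\<lambda>M::real^3^3. r v* M)" using lin_vm linear_conv_bounded_linear by blast
    show ?thesis using bounded_linear.has_vector_derivative[OF bl assms] .
  qed
  moreover have "r v* (R t ** skew w) = - (w \<times> (transpose (R t) *v r))"
  proof -
    have "r v* (R t ** skew w) = (transpose (R t) *v r) \<times> w"
      by (simp add: vector_matrix_mul_assoc[symmetric] vm_skew)
    also have "\<dots> = - (w \<times> (transpose (R t) *v r))" by (rule cross_skew)
    finally show ?thesis .
  qed
  ultimately show ?thesis by simp
qed



lemma blk_quad_cong: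
  assumes "\<And>j. j < n \<Longrightarrow> z j = w j"
  shows "blk_quad n M z = blk_quad n M w"
  unfolding blk_quad_def using assms by (intro sum.cong refl) auto

lemma blk_quad_scale: "blk_quad n M (\<lambda>j. c *\<^sub>R z j) = c^2 * blk_quad n M (z)"
  unfolding blk_quad_def by (simp add: sum_distrib_left power2_eq_square matrix_vector_mult_scaleR algebra_simps)

lemma blk_quad_lower:
  assumes pd: "blk_posdef n M" and n: "n \<ge> 1"
  shows "\<exists>c>0. \<forall>z. c * (\<Sum>j<n. (norm (z j))^2) \<le> blk_quad n M z"
proof -
  define T where "T = product_topology (\<lambda>_. euclidean :: (real^3) topology) {..<n}"
  define K where "K = PiE {..<n} (\<lambda>_. cball (0::real^3) 1)"
  define f where "f = (\<lambda>z::nat \<Rightarrow> real^3. \<Sum>j<n. (norm (z j))^2)"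
  define S where "S = {z \<in> topspace T. f z \<in> {1}}"
  have cK: "compactin T K" unfolding T_def K_def by (simp add: compactin_PiE)
  have cf: "continuous_map T euclideanreal f"
    unfolding f_def T_def by (intro continuous_intros) auto
  have clS: "closedin T S" unfolding S_def by (rule closedin_continuous_map_preimage[OF cf]) auto
  have SK: "S \<subseteq> K"
  proof
    fix z assume "z \<in> S"
    then have z: "z \<in> PiE {..<n} (\<lambda>_. UNIV)" and f1: "f z = 1" by (auto simp: S_def T_def)
    have "norm (z j) \<le> 1" if "j < n" for j
    proof -
      have "(norm (z j))^2 \<le> f z" unfolding f_def
        by (rule member_le_sum[of j "{..<n}" "\<lambda>j. (norm (z j))^2", simplified]) (use that in auto)
      then have "(norm (z j))^2 \<le> 1^2" using f1 by simp
      then show ?thesis by (rule power2_le_imp_le) simp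
    qed
    then show "z \<in> K" using z unfolding K_def by (auto simp: PiE_iff)
  qed
  have cS: "compactin T S" by (rule closed_compactin[OF cK SK clS])
  define g where "g = blk_quad n M"
  have cg: "continuous_map T euclideanreal g"
    unfolding g_def blk_quad_def T_def
  proof (intro continuous_map_sum)
    fix j l assume j: "j \<in> {..<n}" and l: "l \<in> {..<n}"
    have "continuous_map (product_topology (\<lambda>_. euclidean) {..<n}) (prod_topology euclidean euclidean)
            (\<lambda>z::nat\<Rightarrow>real^3. (z j, z l))"
      using j l by (intro continuous_intros) auto
    then have c1: "continuous_map (product_topology (\<lambda>_. euclidean) {..<n}) euclidean (\<lambda>z::nat\<Rightarrow>real^3. (z j, z l))"
      by simp
    have bl: "bounded_linear (\<lambda>x::real^3. M j l *v x)"
      using linear_conv_bounded_linear matrix_vector_mul_linear by blast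
    have "continuous_on UNIV (\<lambda>p::(real^3) \<times> (real^3). M j l *v snd p)"
      by (rule bounded_linear.continuous_on[OF bl continuous_on_snd]) (rule continuous_on_id)
    then have "continuous_on UNIV (\<lambda>p::(real^3) \<times> (real^3). fst p \<bullet> (M j l *v snd p))"
      by (intro continuous_intros)
    then have c2: "continuous_map euclidean euclideanreal (\<lambda>p::(real^3) \<times> (real^3). fst p \<bullet> (M j l *v snd p))"
      by simp
    show "continuous_map (product_topology (\<lambda>_. euclidean) {..<n}) euclideanreal (\<lambda>z. z j \<bullet> (M j l *v z l))"
      using continuous_map_compose[OF c1 c2] by (simp add: o_def)
  qed auto
  have "compactin euclideanreal (g ` S)" by (rule image_compactin[OF cS cg])
  then have cgS: "compact (g ` S)" by simp
  define e0 where "e0 = (\<lambda>j::nat. if j = 0 then (axis 1 1 :: real^3) else (if j < n then 0 else undefined))"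
  have "f e0 = (\<Sum>j<n. if j = 0 then 1 else 0)" unfolding f_def e0_def by (intro sum.cong) auto
  also have "\<dots> = 1" using n by simp
  finally have e0S: "e0 \<in> S"
    using n by (auto simp: S_def T_def PiE_iff extensional_def e0_def)
  then have "g ` S \<noteq> {}" by auto
  from compact_attains_inf[OF cgS this] obtain c where cS': "c \<in> g ` S" and cmin: "\<forall>y\<in>g ` S. c \<le> y" by blast
  from cS' obtain w where wS: "w \<in> S" and cw: "c = g w" by auto
  have "\<exists>j<n. w j \<noteq> 0"
  proof (rule ccontr)
    assume "\<not> ?thesis"
    then have "f w = 0" unfolding f_def by simp
    with wS show False by (simp add: S_def)
  qed
  then have cpos: "c > 0" using pd unfolding blk_posdef_def g_def cw by blast
  have "c * (\<Sum>j<n. (norm (z j))^2) \<le> blk_quad n M z" for z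
  proof (cases "f z = 0")
    case True
    then have "\<forall>j<n. z j = 0" unfolding f_def by (simp add: sum_nonneg_eq_0_iff)
    then have "blk_quad n M z = 0" unfolding blk_quad_def by simp
    then show ?thesis using True unfolding f_def by simp
  next
    case False
    have fpos: "f z > 0" using False unfolding f_def by (metis (no_types, lifting) order_le_less sum_nonneg zero_le_power2)
    define s where "s = sqrt (f z)"
    have spos: "s > 0" using fpos unfolding s_def by simp
    define y where "y = (\<lambda>j. if j < n then (1/s) *\<^sub>R z j else undefined)"
    have fy: "f y = 1"
    proof -
      have "f y = (\<Sum>j<n. (1/s)^2 * (norm (z j))^2)" unfolding f_def y_def
        by (intro sum.cong refl) (simp add: power_divide abs_of_pos[OF spos])
      also have "\<dots> = (1/s)^2 * f z" unfolding f_def by (simp add: sum_distrib_left)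
      also have "\<dots> = 1" using fpos unfolding s_def by (simp add: power_divide)
      finally show ?thesis .
    qed
    have yS: "y \<in> S" using fy unfolding S_def T_def by (auto simp: y_def PiE_iff extensional_def)
    have "blk_quad n M y = (1/s)^2 * blk_quad n M z"
    proof -
      have "blk_quad n M y = blk_quad n M (\<lambda>j. (1/s) *\<^sub>R z j)" by (rule blk_quad_cong) (simp add: y_def)
      then show ?thesis by (simp add: blk_quad_scale)
    qed
    moreover have "c \<le> blk_quad n M y" using cmin yS unfolding g_def by auto
    ultimately have "c \<le> (1/s)^2 * blk_quad n M z" by simp
    then have "c * s^2 \<le> blk_quad n M z" using spos by (simp add: field_simps power2_eq_square)
    moreover have "s^2 = f z" unfolding s_def using fpos by simp
    ultimately show ?thesis unfolding f_def by simp
  qed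
  then show ?thesis using cpos by blast
qed




lemma orth_norm:
  fixes A :: "real^'n^'n"
  assumes "orthogonal_matrix A"
  shows "norm (A *v x) = norm x"
proof -
  have "(A *v x) \<bullet> (A *v x) = x \<bullet> x"
  proof -
    have "(A *v x) \<bullet> (A *v x) = (x v* transpose A) \<bullet> (A *v x)" by simp
    also have "\<dots> = x \<bullet> (transpose A *v (A *v x))" by (rule dot_lmul_matrix)
    also have "\<dots> = x \<bullet> x" using assms
      by (simp add: orthogonal_matrix_def matrix_vector_mul_assoc)
    finally show ?thesis .
  qed
  then show ?thesis by (simp add: norm_eq_sqrt_inner)
qed

lemma cross_lower:
  fixes a b :: "real^3"
  assumes nc: "\<not> collinear {0, a, b}"
  shows "\<exists>c>0. \<forall>u. c * norm u \<le> norm (u \<times> a) + norm (u \<times> b)"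
proof -
  define h where "h = (\<lambda>u::real^3. norm (u \<times> a) + norm (u \<times> b))"
  have ch: "continuous_on (sphere 0 1) h"
    unfolding h_def by (intro continuous_intros bounded_bilinear.continuous_on[OF bilinear_conv_bounded_bilinear[THEN iffD1, OF bilinear_cross]]) 
  have ne: "sphere (0::real^3) 1 \<noteq> {}" using norm_axis_1[of 1] by (metis mem_sphere_0 empty_iff)
  from continuous_attains_inf[OF compact_sphere ne ch] obtain w where
    w: "w \<in> sphere 0 1" and wmin: "\<forall>y\<in>sphere 0 1. h w \<le> h y" by blast
  have hw: "h w > 0"
  proof (rule ccontr)
    assume "\<not> h w > 0"
    then have "h w = 0" unfolding h_def by (smt (verit) norm_ge_zero)
    then have "w \<times> a = 0" "w \<times> b = 0" unfolding h_def by (smt (verit) norm_ge_zero norm_eq_zero)+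
    then have ca: "collinear {0, w, a}" and cb: "collinear {0, w, b}" by (simp_all add: cross_eq_0)
    have w0: "w \<noteq> 0" using w by auto
    from ca w0 obtain ka where ka: "a = ka *\<^sub>R w" by (auto simp: collinear_lemma)
    from cb w0 obtain kb where kb: "b = kb *\<^sub>R w" by (auto simp: collinear_lemma)
    have "collinear {0, ka *\<^sub>R w, kb *\<^sub>R w}" by (simp add: collinear_scaleR_iff)
    with nc ka kb show False by simp
  qed
  have "h w * norm u \<le> h u" for u
  proof (cases "u = 0")
    case True then show ?thesis by (simp add: h_def)
  next
    case False
    define v where "v = (1 / norm u) *\<^sub>R u"
    have "v \<in> sphere 0 1" using False by (simp add: v_def)
    then have "h w \<le> h v" using wmin by auto
    also have "h v = h u / norm u" using False
      by (simp add: h_def v_def cross_mult_left add_divide_distrib)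
    finally show ?thesis using False by (simp add: field_simps)
  qed
  then show ?thesis using hw unfolding h_def by blast
qed

lemma cross_rot:
  fixes R :: "real^3^3"
  assumes "rotation_matrix R"
  shows "norm (e \<times> (transpose R *v r)) = norm ((R *v e) \<times> r)"
proof -
  have o: "orthogonal_matrix R" using assms by (simp add: rotation_matrix_def)
  have d: "det R = 1" using assms by (simp add: rotation_matrix_def)
  have "transpose R *v ((R *v e) \<times> (R *v (transpose R *v r))) = e \<times> (transpose R *v r)"
    using cross_matrix_mult[of R e "transpose R *v r"] d by simp
  moreover have "R *v (transpose R *v r) = r" using o
    by (metis orthogonal_matrix_def matrix_vector_mul_assoc matrix_vector_mul_lid)
  ultimately have "e \<times> (transpose R *v r) = transpose R *v ((R *v e) \<times> r)" by simp
  then show ?thesis using orth_norm[of "transpose R"] o by simp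
qed



lemma onorm_sc: "onorm (\<lambda>h::real. h *\<^sub>R (v::'a::real_normed_vector)) = norm v"
  using onorm_scaleR_left[of "\<lambda>x::real. x" v] onorm_id[where 'a=real] by (simp add: bounded_linear_ident)

lemma vd_bound_interval:
  fixes f :: "real \<Rightarrow> 'a::real_normed_vector"
  assumes ab: "a \<le> b"
    and d: "\<And>s. s\<in>{a..b} \<Longrightarrow> (f has_vector_derivative f' s) (at s within {a..b})"
    and B: "\<And>s. s\<in>{a..b} \<Longrightarrow> norm (f' s) \<le> B"
  shows "norm (f b - f a) \<le> B * (b - a)"
proof -
  have "norm (f b - f a) \<le> B * norm (b - a)"
    by (rule differentiable_bound[of "{a..b}" f "\<lambda>s h. h *\<^sub>R f' s"])
       (use ab d B in \<open>auto simp: has_vector_derivative_def onorm_sc\<close>)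
  then show ?thesis using ab by simp
qed

lemma lip0:
  fixes f :: "real \<Rightarrow> 'a::real_normed_vector"
  assumes d: "\<forall>t\<ge>0. (f has_vector_derivative f' t) (at t within {0..})"
    and B: "\<forall>t\<ge>0. norm (f' t) \<le> B"
  shows "\<forall>s\<ge>0. \<forall>t\<ge>0. norm (f s - f t) \<le> B * \<bar>s - t\<bar>"
proof (intro allI impI)
  fix s t :: real assume "s \<ge> 0" "t \<ge> 0"
  have "norm (f s - f t) \<le> B * norm (s - t)"
    by (rule differentiable_bound[of "{0..}" f "\<lambda>s h. h *\<^sub>R f' s"])
       (use d B \<open>s \<ge> 0\<close> \<open>t \<ge> 0\<close> in \<open>auto simp: has_vector_derivative_def onorm_sc\<close>)
  then show "norm (f s - f t) \<le> B * \<bar>s - t\<bar>" by simp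
qed

lemma mvt0:
  fixes V :: "real \<Rightarrow> real"
  assumes d: "\<forall>t\<ge>0. (V has_real_derivative V' t) (at t within {0..})"
    and "0 \<le> a" "a \<le> b"
  shows "\<exists>z. a \<le> z \<and> z \<le> b \<and> V b - V a = V' z * (b - a)"
proof -
  have "\<exists>x\<in>{a..b}. V b - V a = (\<lambda>h. V' x * h) (b - a)"
  proof (rule mvt_very_simple[OF \<open>a \<le> b\<close>])
    fix x assume "a \<le> x" "x \<le> b"
    then have "(V has_real_derivative V' x) (at x within {0..})" using d \<open>0 \<le> a\<close> by auto
    then have "(V has_real_derivative V' x) (at x within {a..b})"
      by (rule DERIV_subset) (use \<open>0 \<le> a\<close> in auto)
    then show "(V has_derivative (\<lambda>h. V' x * h)) (at x within {a..b})"
      by (simp add: has_field_derivative_def)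
  qed
  then show ?thesis by (auto simp: mult.commute)
qed

lemma barbalat1:
  fixes V V' N :: "real \<Rightarrow> real"
  assumes dV: "\<forall>t\<ge>0. (V has_real_derivative V' t) (at t within {0..})"
    and V0: "\<forall>t\<ge>0. V t \<ge> 0"
    and dVle: "\<forall>t\<ge>0. V' t \<le> - c * N t" and c: "c > 0"
    and N0: "\<forall>t\<ge>0. N t \<ge> 0"
    and lip: "\<forall>s\<ge>0. \<forall>t\<ge>0. \<bar>N s - N t\<bar> \<le> L * \<bar>s - t\<bar>"
  shows "(N \<longlongrightarrow> 0) at_top"
proof -
  have mono: "V b \<le> V a" if ab: "0 \<le> a" "a \<le> b" for a b
  proof -
    obtain z where z: "a \<le> z" "z \<le> b" "V b - V a = V' z * (b - a)" using mvt0[OF dV ab] by blast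
    have z0: "z \<ge> 0" using z ab by linarith
    have "c * N z \<ge> 0" using N0 c z0 by simp
    moreover have "V' z \<le> - c * N z" using dVle z0 by simp
    ultimately have "V' z \<le> 0" by linarith
    then have "V' z * (b - a) \<le> 0" using ab by (simp add: mult_nonpos_nonneg)
    then show ?thesis using z by simp
  qed
  have tail: "\<exists>T\<ge>0. \<forall>t\<ge>T. \<forall>\<delta>\<ge>0. V t - V (t + \<delta>) < d" if d: "d > 0" for d
  proof -
    define L0 where "L0 = Inf (V ` {0..})"
    have bdd: "bdd_below (V ` {0..})"
    proof (rule bdd_belowI)
      fix x assume "x \<in> V ` {0..}"
      then obtain t where "t \<ge> 0" "x = V t" by auto
      then show "0 \<le> x" using V0 by simp
    qed
    have ne: "V ` {0..} \<noteq> {}" by simp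
    have lt: "Inf (V ` {0..}) < L0 + d" using d by (simp add: L0_def)
    obtain s where s: "s \<in> V ` {0..}" "s < L0 + d" using cInf_lessD[OF ne lt] by blast
    then obtain T where T: "T \<ge> 0" "V T < L0 + d" by auto
    have "\<forall>t\<ge>T. \<forall>\<delta>\<ge>0. V t - V (t + \<delta>) < d"
    proof (intro allI impI)
      fix t \<delta> :: real assume tT: "t \<ge> T" and d0: "\<delta> \<ge> 0"
      have "V t \<le> V T" using mono[OF T(1) tT] .
      moreover have "t + \<delta> \<in> {0..}" using T tT d0 by simp
      then have "L0 \<le> V (t + \<delta>)" unfolding L0_def
        by (intro cInf_lower[OF _ bdd] imageI)
      ultimately show "V t - V (t + \<delta>) < d" using T by linarith
    qed
    then show ?thesis using T by blast
  qed
  show ?thesis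
  proof (rule tendstoI)
    fix \<epsilon> :: real assume e: "\<epsilon> > 0"
    define L' where "L' = max L 1"
    have L': "L' > 0" "L \<le> L'" unfolding L'_def by auto
    define \<delta> where "\<delta> = \<epsilon> / (2 * L')"
    have dpos: "\<delta> > 0" using e L' by (simp add: \<delta>_def)
    have Ld: "L' * \<delta> = \<epsilon> / 2" using L' by (simp add: \<delta>_def)
    obtain T where T: "T \<ge> 0" "\<forall>t\<ge>T. \<forall>h\<ge>0. V t - V (t + h) < c * (\<epsilon> / 2) * \<delta>"
      using tail[of "c * (\<epsilon> / 2) * \<delta>"] c e dpos by auto
    have "N t < \<epsilon>" if t: "t \<ge> T" for t
    proof (rule ccontr)
      assume "\<not> N t < \<epsilon>"
      then have Nt: "N t \<ge> \<epsilon>" by simp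
      obtain z where z: "t \<le> z" "z \<le> t + \<delta>" "V (t + \<delta>) - V t = V' z * \<delta>"
        using mvt0[OF dV, of t "t + \<delta>"] T t dpos by force
      have t0: "t \<ge> 0" using T t by linarith
      have z0: "z \<ge> 0" using t0 z by linarith
      have "\<bar>N z - N t\<bar> \<le> L * \<bar>z - t\<bar>" using lip z0 t0 by blast
      also have "\<dots> \<le> L' * \<delta>" using z L' dpos
        by (intro mult_mono) auto
      finally have "N z \<ge> \<epsilon> / 2" using Nt Ld by linarith
      then have "c * (\<epsilon> / 2) \<le> c * N z" using c by (simp add: mult_left_mono)
      moreover have "V' z \<le> - c * N z" using dVle z0 by blast
      ultimately have "V' z \<le> - c * (\<epsilon> / 2)" by linarith
      then have "V' z * \<delta> \<le> (- c * (\<epsilon> / 2)) * \<delta>" using dpos by (intro mult_right_mono) auto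
      then have "V t - V (t + \<delta>) \<ge> c * (\<epsilon> / 2) * \<delta>" using z by simp
      moreover have "V t - V (t + \<delta>) < c * (\<epsilon> / 2) * \<delta>" using T(2) t dpos by auto
      ultimately show False by linarith
    qed
    then have "\<forall>t\<ge>T. dist (N t) 0 < \<epsilon>" using N0 T by auto
    then show "eventually (\<lambda>t. dist (N t) 0 < \<epsilon>) at_top"
      unfolding eventually_at_top_linorder by blast
  qed
qed

lemma barbalat2:
  fixes y g :: "real \<Rightarrow> 'a::real_normed_vector"
  assumes d: "\<forall>t\<ge>0. (y has_vector_derivative g t) (at t within {0..})"
    and y0: "(y \<longlongrightarrow> 0) at_top"
    and lip: "\<forall>s\<ge>0. \<forall>t\<ge>0. norm (g s - g t) \<le> L * \<bar>s - t\<bar>"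
  shows "(g \<longlongrightarrow> 0) at_top"
proof (rule tendstoI)
  fix \<epsilon> :: real assume e: "\<epsilon> > 0"
  define L' where "L' = max L 1"
  have L': "L' > 0" "L \<le> L'" unfolding L'_def by auto
  define \<delta> where "\<delta> = \<epsilon> / (2 * L')"
  have dpos: "\<delta> > 0" using e L' by (simp add: \<delta>_def)
  have Ld: "L' * \<delta> = \<epsilon> / 2" using L' by (simp add: \<delta>_def)
  have "eventually (\<lambda>t. dist (y t) 0 < \<epsilon> * \<delta> / 4) at_top"
    using tendstoD[OF y0, of "\<epsilon> * \<delta> / 4"] e dpos by simp
  then obtain T0 where T0: "\<forall>t\<ge>T0. norm (y t) < \<epsilon> * \<delta> / 4"
    unfolding eventually_at_top_linorder by auto
  define T where "T = max T0 0"
  have "norm (g t) < \<epsilon>" if t: "t \<ge> T" for t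
  proof -
    have t0: "t \<ge> 0" "t \<ge> T0" using t by (auto simp: T_def)
    define h where "h = (\<lambda>s. y s - s *\<^sub>R g t)"
    have "norm (h (t + \<delta>) - h t) \<le> (\<epsilon> / 2) * ((t + \<delta>) - t)"
    proof (rule vd_bound_interval[of t "t + \<delta>" h "\<lambda>s. g s - g t"])
      show "t \<le> t + \<delta>" using dpos by simp
    next
      fix s assume s: "s \<in> {t..t + \<delta>}"
      have "(y has_vector_derivative g s) (at s within {0..})" using d s t0 by auto
      then have "(y has_vector_derivative g s) (at s within {t..t + \<delta>})"
        by (rule has_vector_derivative_within_subset) (use t0 in auto)
      then show "(h has_vector_derivative g s - g t) (at s within {t..t + \<delta>})"
        unfolding h_def by (auto intro!: derivative_eq_intros)
    next
      fix s assume s: "s \<in> {t..t + \<delta>}"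
      have s0: "s \<ge> 0" using s t0 by auto
      have "norm (g s - g t) \<le> L * \<bar>s - t\<bar>" using lip s0 t0(1) by blast
      also have "\<dots> \<le> L' * \<delta>" using s L' dpos by (intro mult_mono) auto
      finally show "norm (g s - g t) \<le> \<epsilon> / 2" using Ld by simp
    qed
    moreover have "h (t + \<delta>) - h t = (y (t + \<delta>) - y t) - \<delta> *\<^sub>R g t"
      unfolding h_def by (simp add: algebra_simps)
    ultimately have A: "norm ((y (t + \<delta>) - y t) - \<delta> *\<^sub>R g t) \<le> \<epsilon> / 2 * \<delta>" by simp
    have "\<delta> * norm (g t) = norm (\<delta> *\<^sub>R g t)" using dpos by simp
    also have "\<dots> \<le> norm (y (t + \<delta>) - y t) + norm ((y (t + \<delta>) - y t) - \<delta> *\<^sub>R g t)"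
      using norm_triangle_sub[of "\<delta> *\<^sub>R g t" "y (t + \<delta>) - y t"] by (simp add: norm_minus_commute)
    also have "\<dots> \<le> norm (y (t + \<delta>)) + norm (y t) + \<epsilon> / 2 * \<delta>"
      using A norm_triangle_ineq4[of "y (t + \<delta>)" "y t"] by linarith
    also have "\<dots> < \<epsilon> * \<delta> / 4 + \<epsilon> * \<delta> / 4 + \<epsilon> / 2 * \<delta>"
    proof -
      have "norm (y (t + \<delta>)) < \<epsilon> * \<delta> / 4" using T0 t0 dpos by simp
      moreover have "norm (y t) < \<epsilon> * \<delta> / 4" using T0 t0 by simp
      ultimately show ?thesis by linarith
    qed
    finally have "\<delta> * norm (g t) < \<delta> * \<epsilon>" by (simp add: field_simps)
    then show ?thesis using dpos by simp
  qed
  then have "\<forall>t\<ge>T. dist (g t) 0 < \<epsilon>" by simp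
  then show "eventually (\<lambda>t. dist (g t) 0 < \<epsilon>) at_top"
    unfolding eventually_at_top_linorder by blast
qed



lemma mv_sum: "(M::real^'n^'m) *v sum f S = (\<Sum>x\<in>S. M *v f x)"
  by (induct S rule: infinite_finite_induct) (simp_all add: matrix_vector_right_distrib)

lemma sum_mv: "(sum f S :: real^'n^'m) *v x = (\<Sum>p\<in>S. f p *v x)"
  by (induct S rule: infinite_finite_induct) (simp_all add: matrix_vector_mult_add_rdistrib)

lemma inner_transpose: "x \<bullet> (transpose M *v y) = (M *v x) \<bullet> (y::real^'n)"
proof -
  have "(M *v x) \<bullet> y = (x v* transpose M) \<bullet> y" by simp
  also have "\<dots> = x \<bullet> (transpose M *v y)" by (rule dot_lmul_matrix)
  finally show ?thesis by simp
qed

lemma neg_mv: "(- M) *v x = - ((M::real^'n^'m) *v x)"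
  by (simp add: matrix_vector_mult_def vec_eq_iff sum_negf)

lemma lyap_ident:
  fixes A P Q :: "nat \<Rightarrow> nat \<Rightarrow> real^3^3" and z w :: "nat \<Rightarrow> real^3"
  assumes sym: "blk_symmetric n P" and ly: "lyapunov_eq n A P Q"
  shows "(\<Sum>j<n. \<Sum>l<n. ((\<Sum>p<n. A j p *v z p) + w j) \<bullet> (P j l *v z l)
            + z j \<bullet> (P j l *v ((\<Sum>p<n. A l p *v z p) + w l)))
       = - blk_quad n Q z + 2 * (\<Sum>j<n. \<Sum>l<n. w j \<bullet> (P j l *v z l))"
proof -
  have Qe: "Q j l = - ((\<Sum>p<n. transpose (A p j) ** P p l) + (\<Sum>p<n. P j p ** A p l))"
    if "j < n" "l < n" for j l
  proof -
    have h: "(\<Sum>p<n. transpose (A p j) ** P p l) + (\<Sum>p<n. P j p ** A p l) = - Q j l"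
      using ly that unfolding lyapunov_eq_def blk_mult_def blk_transpose_def by blast
    show ?thesis by (simp add: h)
  qed
  have Q1: "blk_quad n Q z = - ((\<Sum>j<n. \<Sum>l<n. \<Sum>p<n. (A p j *v z j) \<bullet> (P p l *v z l))
                              + (\<Sum>j<n. \<Sum>l<n. \<Sum>p<n. z j \<bullet> (P j p *v (A p l *v z l))))"
  proof -
    have "blk_quad n Q z = (\<Sum>j<n. \<Sum>l<n. - ((\<Sum>p<n. (A p j *v z j) \<bullet> (P p l *v z l))
                              + (\<Sum>p<n. z j \<bullet> (P j p *v (A p l *v z l)))))"
      unfolding blk_quad_def
    proof (intro sum.cong refl)
      fix j l assume "j \<in> {..<n}" "l \<in> {..<n}"
      then have "Q j l = - ((\<Sum>p<n. transpose (A p j) ** P p l) + (\<Sum>p<n. P j p ** A p l))"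
        using Qe by auto
      then show "z j \<bullet> (Q j l *v z l) = - ((\<Sum>p<n. (A p j *v z j) \<bullet> (P p l *v z l))
                              + (\<Sum>p<n. z j \<bullet> (P j p *v (A p l *v z l))))"
      proof -
        have "Q j l *v z l = - ((\<Sum>p<n. transpose (A p j) *v (P p l *v z l)) + (\<Sum>p<n. P j p *v (A p l *v z l)))"
          unfolding \<open>Q j l = _\<close> neg_mv matrix_vector_mult_add_rdistrib sum_mv matrix_vector_mul_assoc ..
        then have "z j \<bullet> (Q j l *v z l) = - ((\<Sum>p<n. z j \<bullet> (transpose (A p j) *v (P p l *v z l))) + (\<Sum>p<n. z j \<bullet> (P j p *v (A p l *v z l))))"
          by (simp only: inner_minus_right inner_add_right inner_sum_right)
        then show ?thesis by (simp only: inner_transpose)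
      qed
    qed
    also have "\<dots> = - ((\<Sum>j<n. \<Sum>l<n. \<Sum>p<n. (A p j *v z j) \<bullet> (P p l *v z l))
                              + (\<Sum>j<n. \<Sum>l<n. \<Sum>p<n. z j \<bullet> (P j p *v (A p l *v z l))))"
      by (simp add: sum.distrib sum_negf sum_subtractf)
    finally show ?thesis .
  qed
  have T1: "(\<Sum>j<n. \<Sum>l<n. (\<Sum>p<n. A j p *v z p) \<bullet> (P j l *v z l))
          = (\<Sum>j<n. \<Sum>l<n. \<Sum>p<n. (A p j *v z j) \<bullet> (P p l *v z l))"
  proof -
    have "(\<Sum>j<n. \<Sum>l<n. (\<Sum>p<n. A j p *v z p) \<bullet> (P j l *v z l))
        = (\<Sum>j<n. \<Sum>l<n. \<Sum>p<n. (A j p *v z p) \<bullet> (P j l *v z l))"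
      by (simp add: inner_sum_left)
    also have "\<dots> = (\<Sum>j<n. \<Sum>p<n. \<Sum>l<n. (A j p *v z p) \<bullet> (P j l *v z l))"
      by (rule sum.cong[OF refl]) (rule sum.swap)
    also have "\<dots> = (\<Sum>p<n. \<Sum>j<n. \<Sum>l<n. (A j p *v z p) \<bullet> (P j l *v z l))"
      by (rule sum.swap)
    also have "\<dots> = (\<Sum>p<n. \<Sum>l<n. \<Sum>j<n. (A j p *v z p) \<bullet> (P j l *v z l))"
      by (rule sum.cong[OF refl]) (rule sum.swap)
    finally show ?thesis .
  qed
  have T3: "(\<Sum>j<n. \<Sum>l<n. z j \<bullet> (P j l *v (\<Sum>p<n. A l p *v z p)))
          = (\<Sum>j<n. \<Sum>l<n. \<Sum>p<n. z j \<bullet> (P j p *v (A p l *v z l)))"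
  proof -
    have "(\<Sum>j<n. \<Sum>l<n. z j \<bullet> (P j l *v (\<Sum>p<n. A l p *v z p)))
        = (\<Sum>j<n. \<Sum>l<n. \<Sum>p<n. z j \<bullet> (P j l *v (A l p *v z p)))"
      by (simp add: mv_sum inner_sum_right)
    also have "\<dots> = (\<Sum>j<n. \<Sum>p<n. \<Sum>l<n. z j \<bullet> (P j l *v (A l p *v z p)))"
      by (rule sum.cong[OF refl]) (rule sum.swap)
    finally show ?thesis .
  qed
  have T4: "(\<Sum>j<n. \<Sum>l<n. z j \<bullet> (P j l *v w l)) = (\<Sum>j<n. \<Sum>l<n. w j \<bullet> (P j l *v z l))"
  proof -
    have "(\<Sum>j<n. \<Sum>l<n. z j \<bullet> (P j l *v w l)) = (\<Sum>j<n. \<Sum>l<n. w l \<bullet> (P l j *v z j))"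
    proof (intro sum.cong refl)
      fix j l assume jl: "j \<in> {..<n}" "l \<in> {..<n}"
      have "P l j = transpose (P j l)" using sym jl unfolding blk_symmetric_def by blast
      then have e1: "w l \<bullet> (P l j *v z j) = (P j l *v w l) \<bullet> z j"
        using inner_transpose[of "w l" "P j l" "z j"] by simp
      have e2: "z j \<bullet> (P j l *v w l) = (P j l *v w l) \<bullet> z j" by (rule inner_commute)
      show "z j \<bullet> (P j l *v w l) = w l \<bullet> (P l j *v z j)"
        using e1 e2 by simp
    qed
    also have "\<dots> = (\<Sum>l<n. \<Sum>j<n. w l \<bullet> (P l j *v z j))" by (rule sum.swap)
    finally show ?thesis .
  qed
  have "(\<Sum>j<n. \<Sum>l<n. ((\<Sum>p<n. A j p *v z p) + w j) \<bullet> (P j l *v z l)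
            + z j \<bullet> (P j l *v ((\<Sum>p<n. A l p *v z p) + w l)))
      = (\<Sum>j<n. \<Sum>l<n. (\<Sum>p<n. A j p *v z p) \<bullet> (P j l *v z l))
        + (\<Sum>j<n. \<Sum>l<n. w j \<bullet> (P j l *v z l))
        + (\<Sum>j<n. \<Sum>l<n. z j \<bullet> (P j l *v (\<Sum>p<n. A l p *v z p)))
        + (\<Sum>j<n. \<Sum>l<n. z j \<bullet> (P j l *v w l))"
    by (simp add: inner_add_left inner_add_right matrix_vector_right_distrib sum.distrib)
  also have "\<dots> = - blk_quad n Q z + 2 * (\<Sum>j<n. \<Sum>l<n. w j \<bullet> (P j l *v z l))"
    unfolding T1 T3 T4 Q1 by simp
  finally show ?thesis .
qed




definition bnd :: "(real \<Rightarrow> 'a::real_normed_vector) \<Rightarrow> bool" where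
  "bnd f \<longleftrightarrow> (\<exists>B. \<forall>t\<ge>0. norm (f t) \<le> B)"

lemma bndI: "(\<And>t. t \<ge> 0 \<Longrightarrow> norm (f t) \<le> B) \<Longrightarrow> bnd f"
  unfolding bnd_def by blast

lemma bndE: assumes "bnd f" obtains B where "B \<ge> 0" "\<And>t. t \<ge> 0 \<Longrightarrow> norm (f t) \<le> B"
proof -
  from assms obtain B where B: "\<forall>t\<ge>0. norm (f t) \<le> B" unfolding bnd_def by blast
  have "B \<ge> 0" using B[rule_format, of 0] norm_ge_zero[of "f 0"] by linarith
  then show ?thesis using that B by blast
qed

lemma bnd_const: "bnd (\<lambda>t. c)"
  by (rule bndI[of _ "norm c"]) simp

lemma bnd_add: "bnd f \<Longrightarrow> bnd g \<Longrightarrow> bnd (\<lambda>t. f t + g t)"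
proof -
  assume "bnd f" "bnd g"
  then obtain A B where A: "\<And>t. t\<ge>0 \<Longrightarrow> norm (f t) \<le> A" and B: "\<And>t. t\<ge>0 \<Longrightarrow> norm (g t) \<le> B"
    by (metis bndE)
  show ?thesis
  proof (rule bndI[of _ "A + B"])
    fix t :: real assume "t \<ge> 0"
    then show "norm (f t + g t) \<le> A + B" using A B norm_triangle_ineq[of "f t" "g t"] by fastforce
  qed
qed

lemma bnd_minus: "bnd f \<Longrightarrow> bnd (\<lambda>t. - f t)"
  unfolding bnd_def by simp

lemma bnd_diff: "bnd f \<Longrightarrow> bnd g \<Longrightarrow> bnd (\<lambda>t. f t - g t)"
  using bnd_add[of f "\<lambda>t. - g t"] bnd_minus[of g] by simp

lemma bnd_scaleR: "bnd f \<Longrightarrow> bnd (\<lambda>t. c *\<^sub>R f t)"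
proof -
  assume "bnd f"
  then obtain A where A: "\<And>t. t\<ge>0 \<Longrightarrow> norm (f t) \<le> A" by (metis bndE)
  show ?thesis
  proof (rule bndI[of _ "\<bar>c\<bar> * A"])
    fix t :: real assume "t \<ge> 0"
    then show "norm (c *\<^sub>R f t) \<le> \<bar>c\<bar> * A" using A by (simp add: mult_left_mono)
  qed
qed

lemma bnd_bilinear:
  assumes bb: "bounded_bilinear h" and "bnd f" "bnd g"
  shows "bnd (\<lambda>t. h (f t) (g t))"
proof -
  obtain A where A0: "A \<ge> 0" and A: "\<And>t. t\<ge>0 \<Longrightarrow> norm (f t) \<le> A" using assms(2) by (metis bndE)
  obtain B where B0: "B \<ge> 0" and B: "\<And>t. t\<ge>0 \<Longrightarrow> norm (g t) \<le> B" using assms(3) by (metis bndE)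
  obtain K' where K': "K' \<ge> 0" "\<And>a b. norm (h a b) \<le> norm a * norm b * K'"
    using bounded_bilinear.nonneg_bounded[OF bb] by blast
  show ?thesis
  proof (rule bndI[of _ "A * B * K'"])
    fix t :: real assume t: "t \<ge> 0"
    have "norm (h (f t) (g t)) \<le> norm (f t) * norm (g t) * K'" by (rule K'(2))
    also have "\<dots> \<le> A * B * K'"
      using A[OF t] B[OF t] K'(1) A0 B0 by (intro mult_right_mono mult_mono) auto
    finally show "norm (h (f t) (g t)) \<le> A * B * K'" .
  qed
qed

lemma bnd_cross: "bnd f \<Longrightarrow> bnd g \<Longrightarrow> bnd (\<lambda>t. f t \<times> g t)"
  using bnd_bilinear[OF bb_cross] .

lemma bnd_inner: "bnd (f::real\<Rightarrow>'a::real_inner) \<Longrightarrow> bnd g \<Longrightarrow> bnd (\<lambda>t. f t \<bullet> g t)"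
  using bnd_bilinear[OF bounded_bilinear_inner] .

lemma bnd_mult: "bnd (f::real\<Rightarrow>real) \<Longrightarrow> bnd g \<Longrightarrow> bnd (\<lambda>t. f t * g t)"
  using bnd_bilinear[OF bounded_bilinear_mult] .

lemma bnd_linear:
  assumes bl: "bounded_linear h" and "bnd f"
  shows "bnd (\<lambda>t. h (f t))"
proof -
  obtain A where A0: "A \<ge> 0" and A: "\<And>t. t\<ge>0 \<Longrightarrow> norm (f t) \<le> A" using assms(2) by (metis bndE)
  obtain K where K: "K > 0" "\<And>a. norm (h a) \<le> norm a * K"
    using bounded_linear.pos_bounded[OF bl] by blast
  show ?thesis
  proof (rule bndI[of _ "A * K"])
    fix t :: real assume t: "t \<ge> 0"
    have "norm (h (f t)) \<le> norm (f t) * K" by (rule K(2))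
    also have "\<dots> \<le> A * K" using A[OF t] K(1) by (intro mult_right_mono) auto
    finally show "norm (h (f t)) \<le> A * K" .
  qed
qed

lemma bnd_mv: "bnd f \<Longrightarrow> bnd (\<lambda>t. (M::real^'n^'m) *v f t)"
  using bnd_linear[of "(*v) M"] by simp

lemma bnd_sum: "finite S \<Longrightarrow> (\<And>x. x \<in> S \<Longrightarrow> bnd (f x)) \<Longrightarrow> bnd (\<lambda>t. \<Sum>x\<in>S. f x t)"
proof (induct S rule: finite_induct)
  case empty then show ?case by (simp add: bnd_const)
next
  case (insert x F)
  then show ?case by (simp add: bnd_add)
qed




lemma vd_blk_quad:
  fixes z :: "nat \<Rightarrow> real \<Rightarrow> real^3" and zd :: "nat \<Rightarrow> real^3" and M :: "nat \<Rightarrow> nat \<Rightarrow> real^3^3"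
  assumes d: "\<And>j. j < n \<Longrightarrow> (z j has_vector_derivative zd j) (at t within S)"
  shows "((\<lambda>t. blk_quad n M (\<lambda>j. z j t)) has_vector_derivative
           (\<Sum>j<n. \<Sum>l<n. zd j \<bullet> (M j l *v z l t) + z j t \<bullet> (M j l *v zd l))) (at t within S)"
  unfolding blk_quad_def
proof (intro has_vector_derivative_sum)
  fix j l assume j: "j \<in> {..<n}" and l: "l \<in> {..<n}"
  have "((\<lambda>t. z j t \<bullet> (M j l *v z l t)) has_vector_derivative
          (z j t \<bullet> (M j l *v zd l) + zd j \<bullet> (M j l *v z l t))) (at t within S)"
    using j l by (intro vd_inner vd_mv d) auto
  then show "((\<lambda>t. z j t \<bullet> (M j l *v z l t)) has_vector_derivative
          (zd j \<bullet> (M j l *v z l t) + z j t \<bullet> (M j l *v zd l))) (at t within S)"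
    by (simp add: add.commute)
qed

definition Ginv :: "real^3^3 \<Rightarrow> real^3^3" where
  "Ginv \<Gamma> = (\<chi> a b. if a = b then 1 / \<Gamma>$a$a else 0)"

lemma Ginv_facts:
  assumes dp: "diag_posdef \<Gamma>"
  shows "transpose \<Gamma> ** Ginv \<Gamma> = mat 1" "transpose (Ginv \<Gamma>) = Ginv \<Gamma>"
    "x \<bullet> (Ginv \<Gamma> *v x) = (\<Sum>a\<in>UNIV. (x$a)^2 / \<Gamma>$a$a)"
    "0 \<le> x \<bullet> (Ginv \<Gamma> *v x)"
    "(norm x)^2 \<le> (\<Sum>a\<in>UNIV. \<Gamma>$a$a) * (x \<bullet> (Ginv \<Gamma> *v x))"
proof -
  have off: "\<And>a b. a \<noteq> b \<Longrightarrow> \<Gamma>$a$b = 0" and pos: "\<And>a. \<Gamma>$a$a > 0"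
    using dp unfolding diag_posdef_def by auto
  show "transpose \<Gamma> ** Ginv \<Gamma> = mat 1"
  proof -
    have "(\<Sum>k\<in>UNIV. \<Gamma>$k$a * (if k = b then 1 / \<Gamma>$k$k else 0)) = (if a = b then 1 else 0)" for a b :: 3
    proof -
      have "(\<Sum>k\<in>UNIV. \<Gamma>$k$a * (if k = b then 1 / \<Gamma>$k$k else 0)) = \<Gamma>$b$a / \<Gamma>$b$b"
        by (simp add: if_distrib[of "\<lambda>x. _ * x"] cong: if_cong)
      then show ?thesis using off[of b a] pos[of b] by auto
    qed
    then show ?thesis
      by (simp add: vec_eq_iff matrix_matrix_mult_def transpose_def Ginv_def mat_def)
  qed
  show "transpose (Ginv \<Gamma>) = Ginv \<Gamma>"
    by (simp add: vec_eq_iff transpose_def Ginv_def)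
  have mv: "(Ginv \<Gamma> *v x) $ a = x$a / \<Gamma>$a$a" for a
    by (simp add: matrix_vector_mult_def Ginv_def if_distrib[of "\<lambda>y. y * _"] cong: if_cong)
  show q: "x \<bullet> (Ginv \<Gamma> *v x) = (\<Sum>a\<in>UNIV. (x$a)^2 / \<Gamma>$a$a)"
    by (simp add: inner_vec_def mv power2_eq_square)
  show "0 \<le> x \<bullet> (Ginv \<Gamma> *v x)" unfolding q using pos by (intro sum_nonneg) (simp add: less_imp_le)
  have "(norm x)^2 = (\<Sum>a\<in>UNIV. (x$a)^2)" by (simp add: norm_vec_def L2_set_def sum_nonneg)
  also have "\<dots> = (\<Sum>a\<in>UNIV. \<Gamma>$a$a * ((x$a)^2 / \<Gamma>$a$a))"
    using pos by (intro sum.cong refl) (simp add: less_imp_neq[symmetric])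
  also have "\<dots> \<le> (\<Sum>a\<in>UNIV. (\<Sum>b\<in>UNIV. \<Gamma>$b$b) * ((x$a)^2 / \<Gamma>$a$a))"
  proof (intro sum_mono mult_right_mono)
    fix a :: 3
    show "\<Gamma>$a$a \<le> (\<Sum>b\<in>UNIV. \<Gamma>$b$b)"
      by (rule member_le_sum) (use pos in \<open>auto simp: less_imp_le\<close>)
    show "0 \<le> (x$a)^2 / \<Gamma>$a$a" using pos[of a] by simp
  qed
  also have "\<dots> = (\<Sum>a\<in>UNIV. \<Gamma>$a$a) * (x \<bullet> (Ginv \<Gamma> *v x))"
    unfolding q by (simp add: sum_distrib_left)
  finally show "(norm x)^2 \<le> (\<Sum>a\<in>UNIV. \<Gamma>$a$a) * (x \<bullet> (Ginv \<Gamma> *v x))" .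
qed

lemma Ad_mv: "Ad n g j p *v x = companion n g j p *\<^sub>R x"
  by (simp add: Ad_def scaleR_matrix_vector_assoc[symmetric])

lemma Bd_mv: "Bd n g j *v x = (if j = n - 1 then g n *\<^sub>R x else 0)"
  by (simp add: Bd_def scaleR_matrix_vector_assoc[symmetric])

lemma ups_inner:
  "(\<Sum>j<n. \<Sum>l<n. (Bd n g j *v v) \<bullet> (P j l *v z l)) = v \<bullet> upsilon n g P z"
proof -
  have "v \<bullet> upsilon n g P z = (\<Sum>j<n. v \<bullet> (transpose (Bd n g j) *v (\<Sum>l<n. P j l *v z l)))"
    unfolding upsilon_def by (simp add: inner_sum_right)
  also have "\<dots> = (\<Sum>j<n. (Bd n g j *v v) \<bullet> (\<Sum>l<n. P j l *v z l))"
    by (simp only: inner_transpose)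
  also have "\<dots> = (\<Sum>j<n. \<Sum>l<n. (Bd n g j *v v) \<bullet> (P j l *v z l))"
    by (simp add: inner_sum_right)
  finally show ?thesis by simp
qed



lemma mv_neg: "(M::real^'n^'m) *v (- x) = - (M *v x)"
  by (simp add: matrix_vector_mult_def vec_eq_iff sum_negf)

theorem proposition1:
  fixes m n :: nat
    and \<gamma> :: "nat \<Rightarrow> nat \<Rightarrow> real"
    and Q P :: "nat \<Rightarrow> nat \<Rightarrow> nat \<Rightarrow> real^3^3"
    and \<Gamma> :: "real^3^3"
    and R :: "real \<Rightarrow> real^3^3"
    and \<omega> \<omega>m :: "real \<Rightarrow> real^3"
    and \<eta> :: "real^3"
    and r :: "nat \<Rightarrow> real^3"
    and b bh :: "nat \<Rightarrow> real \<Rightarrow> real^3"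
    and \<eta>h :: "real \<Rightarrow> real^3"
    and X :: "nat \<Rightarrow> nat \<Rightarrow> real \<Rightarrow> real^3"
  assumes n_pos: "n \<ge> 1"
    and hurwitz: "\<forall>i\<in>{1..m}. hurwitz_coeffs n (\<gamma> i)"
    and Q_spd: "\<forall>i\<in>{1..m}. blk_symmetric n (Q i) \<and> blk_posdef n (Q i)"
    and P_spd: "\<forall>i\<in>{1..m}. blk_symmetric n (P i) \<and> blk_posdef n (P i)
                   \<and> lyapunov_eq n (Ad n (\<gamma> i)) (P i) (Q i)"
    and Gamma_d: "diag_posdef \<Gamma>"
    and attitude: "\<forall>t\<ge>0. rotation_matrix (R t) \<and>
                     (R has_vector_derivative (R t ** skew (\<omega> t))) (at t within {0..})"
    and meas: "\<forall>i\<in>{1..m}. \<forall>t\<ge>0. b i t = transpose (R t) *v r i"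
    and gyro: "\<forall>t\<ge>0. \<omega>m t = \<omega> t + \<eta>"
    and gyro_bounded: "bounded (\<omega>m ` {0..})"
    and noncollinear: "\<exists>i\<in>{1..m}. \<exists>j\<in>{1..m}. \<forall>t\<ge>0. \<not> collinear {0, b i t, b j t}"
    and filt_x: "\<forall>i\<in>{1..m}. \<forall>j. j + 1 < n \<longrightarrow>
                   (\<forall>t\<ge>0. (X i j has_vector_derivative X i (j + 1) t) (at t within {0..}))"
    and filt_xn: "\<forall>i\<in>{1..m}. \<forall>t\<ge>0. X i (n - 1) t =
                   - (\<Sum>k=1..n-1. \<gamma> i k *\<^sub>R X i (n - k - 1) t) + \<gamma> i n *\<^sub>R (b i t - bh i t)"
    and filt_b: "\<forall>i\<in>{1..m}. \<forall>t\<ge>0. (bh i has_vector_derivative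
                   (- (skew (\<omega>m t - \<eta>h t) *v b i t) + X i 0 t)) (at t within {0..})"
    and filt_eta: "\<forall>t\<ge>0. (\<eta>h has_vector_derivative
                   (\<Gamma> *v (\<Sum>i=1..m. skew (b i t) *v upsilon n (\<gamma> i) (P i) (\<lambda>j. X i j t))))
                   (at t within {0..})"
  shows "(\<forall>i\<in>{1..m}. ((\<lambda>t. b i t - bh i t) \<longlongrightarrow> 0) at_top)
         \<and> ((\<lambda>t. \<eta> - \<eta>h t) \<longlongrightarrow> 0) at_top"
proof -
  define I where "I = {1..m}"
  have finI: "finite I" by (simp add: I_def)
  define bt where "bt = (\<lambda>i t. b i t - bh i t)"
  define et where "et = (\<lambda>t. \<eta> - \<eta>h t)"
  define u where "u = (\<lambda>i t. et t \<times> b i t)"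
  define zd where "zd = (\<lambda>i j t. (\<Sum>p<n. companion n (\<gamma> i) j p *\<^sub>R X i p t)
                             + (if j = n - 1 then \<gamma> i n *\<^sub>R u i t else 0))"
  have gn: "\<gamma> i n \<noteq> 0" if i: "i \<in> I" for i
  proof
    assume g0: "\<gamma> i n = 0"
    have hw: "hurwitz_coeffs n (\<gamma> i)" using hurwitz i by (simp add: I_def)
    have "(0::complex) ^ n + (\<Sum>k=1..n. complex_of_real (\<gamma> i k) * 0 ^ (n - k)) = 0"
    proof -
      have "(\<Sum>k=1..n. complex_of_real (\<gamma> i k) * (0::complex) ^ (n - k))
          = (\<Sum>k=1..n. if k = n then complex_of_real (\<gamma> i k) else 0)"
        by (intro sum.cong refl) auto
      also have "\<dots> = complex_of_real (\<gamma> i n)" using n_pos by simp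
      finally show ?thesis using g0 n_pos by simp
    qed
    then have "Re 0 < 0" using hw unfolding hurwitz_coeffs_def by blast
    then show False by simp
  qed
  have db: "(b i has_vector_derivative - (\<omega> t \<times> b i t)) (at t within {0..})"
    if i: "i \<in> I" and t: "t \<ge> 0" for i t
  proof -
    have h1: "(R has_vector_derivative (R t ** skew (\<omega> t))) (at t within {0..})"
      using attitude t by blast
    have eq: "b i s = transpose (R s) *v r i" if "s \<in> {0..}" for s
    proof -
      have "i \<in> {1..m}" "s \<ge> 0" using i that by (auto simp: I_def)
      then show ?thesis using meas by blast
    qed
    have h2: "((\<lambda>t. transpose (R t) *v r i) has_vector_derivative - (\<omega> t \<times> b i t)) (at t within {0..})"
      using vd_bmeas[OF h1, of "r i"] eq[of t] t by simp
    show ?thesis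
      by (rule has_vector_derivative_transform[OF _ _ h2]) (use t eq in auto)
  qed
  have dbt: "(bt i has_vector_derivative (u i t - X i 0 t)) (at t within {0..})"
    if i: "i \<in> I" and t: "t \<ge> 0" for i t
  proof -
    have i': "i \<in> {1..m}" using i by (simp add: I_def)
    have hbh: "(bh i has_vector_derivative (- (skew (\<omega>m t - \<eta>h t) *v b i t) + X i 0 t)) (at t within {0..})"
      using filt_b i' t by blast
    have h: "((\<lambda>t. b i t - bh i t) has_vector_derivative
              (- (\<omega> t \<times> b i t) - (- (skew (\<omega>m t - \<eta>h t) *v b i t) + X i 0 t))) (at t within {0..})"
      by (rule has_vector_derivative_diff[OF db[OF i t] hbh])
    have "\<omega>m t - \<eta>h t = \<omega> t + et t" using gyro t by (simp add: et_def)
    then have "- (\<omega> t \<times> b i t) - (- (skew (\<omega>m t - \<eta>h t) *v b i t) + X i 0 t) = u i t - X i 0 t"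
      by (simp add: u_def skew_mv cross_add_left)
    then show ?thesis using h unfolding bt_def by (metis (no_types, lifting))
  qed
  have dX: "(X i j has_vector_derivative zd i j t) (at t within {0..})"
    if i: "i \<in> I" and j: "j < n" and t: "t \<ge> 0" for i j t
  proof -
    have i': "i \<in> {1..m}" using i by (simp add: I_def)
    show ?thesis
    proof (cases "j + 1 < n")
      case True
      have h: "(X i j has_vector_derivative X i (j + 1) t) (at t within {0..})"
        using filt_x i' True t by blast
      have "(\<Sum>p<n. companion n (\<gamma> i) j p *\<^sub>R X i p t) = (\<Sum>p<n. if p = j + 1 then X i p t else 0)"
        using True by (intro sum.cong refl) (simp add: companion_def)
      also have "\<dots> = X i (j + 1) t" using True by simp
      finally have "zd i j t = X i (j + 1) t" using True by (simp add: zd_def)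
      then show ?thesis using h by simp
    next
      case False
      then have jn: "j = n - 1" using j by simp
      define F where "F = (\<lambda>t. - (\<Sum>k=1..n-1. \<gamma> i k *\<^sub>R X i (n - k - 1) t) + \<gamma> i n *\<^sub>R bt i t)"
      have hk: "(X i (n - k - 1) has_vector_derivative X i (n - k) t) (at t within {0..})" if k: "k \<in> {1..n-1}" for k
      proof -
        have "(n - k - 1) + 1 < n" "(n - k - 1) + 1 = n - k" using k by auto
        then show ?thesis using filt_x i' t by metis
      qed
      have hs: "((\<lambda>t. \<Sum>k=1..n-1. \<gamma> i k *\<^sub>R X i (n - k - 1) t) has_vector_derivative
                  (\<Sum>k=1..n-1. \<gamma> i k *\<^sub>R X i (n - k) t)) (at t within {0..})"
        by (rule has_vector_derivative_sum) (rule bounded_linear.has_vector_derivative[OF bounded_linear_scaleR_right hk])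
      have hF: "(F has_vector_derivative (- (\<Sum>k=1..n-1. \<gamma> i k *\<^sub>R X i (n - k) t) + \<gamma> i n *\<^sub>R (u i t - X i 0 t))) (at t within {0..})"
        unfolding F_def
        by (rule has_vector_derivative_add[OF has_vector_derivative_minus[OF hs]
              bounded_linear.has_vector_derivative[OF bounded_linear_scaleR_right dbt[OF i t]]])
      have FX: "X i j s = F s" if "s \<in> {0..}" for s
      proof -
        have s0: "s \<ge> 0" using that by simp
        have "X i (n - 1) s = - (\<Sum>k=1..n-1. \<gamma> i k *\<^sub>R X i (n - k - 1) s) + \<gamma> i n *\<^sub>R (b i s - bh i s)"
          using filt_xn i' s0 by blast
        then show ?thesis using jn by (simp add: F_def bt_def)
      qed
      have "- (\<Sum>k=1..n-1. \<gamma> i k *\<^sub>R X i (n - k) t) + \<gamma> i n *\<^sub>R (u i t - X i 0 t) = zd i j t"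
      proof -
        have c: "companion n (\<gamma> i) (n - 1) p = - \<gamma> i (n - p)" for p
          using n_pos by (simp add: companion_def)
        have "(\<Sum>p<n. \<gamma> i (n - p) *\<^sub>R X i p t) = (\<Sum>p\<in>insert 0 {1..<n}. \<gamma> i (n - p) *\<^sub>R X i p t)"
        proof -
          have "{..<n} = insert 0 {1..<n}" using n_pos by auto
          then show ?thesis by simp
        qed
        also have "\<dots> = \<gamma> i n *\<^sub>R X i 0 t + (\<Sum>p\<in>{1..<n}. \<gamma> i (n - p) *\<^sub>R X i p t)"
          by (subst sum.insert) auto
        also have "(\<Sum>p\<in>{1..<n}. \<gamma> i (n - p) *\<^sub>R X i p t) = (\<Sum>k=1..n-1. \<gamma> i k *\<^sub>R X i (n - k) t)"
          by (rule sum.reindex_bij_witness[of _ "\<lambda>k. n - k" "\<lambda>p. n - p"]) auto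
        finally have e: "(\<Sum>p<n. \<gamma> i (n - p) *\<^sub>R X i p t) = \<gamma> i n *\<^sub>R X i 0 t + (\<Sum>k=1..n-1. \<gamma> i k *\<^sub>R X i (n - k) t)" .
        have "(\<Sum>p<n. companion n (\<gamma> i) (n - 1) p *\<^sub>R X i p t) = - (\<Sum>p<n. \<gamma> i (n - p) *\<^sub>R X i p t)"
          by (simp only: c scaleR_minus_left sum_negf)
        then have "(\<Sum>p<n. companion n (\<gamma> i) (n - 1) p *\<^sub>R X i p t)
            = - (\<gamma> i n *\<^sub>R X i 0 t + (\<Sum>k=1..n-1. \<gamma> i k *\<^sub>R X i (n - k) t))"
          by (simp only: e)
        then show ?thesis using jn by (simp add: zd_def algebra_simps)
      qed
      then show ?thesis
        using has_vector_derivative_transform[of t "{0..}" "X i j" F, OF _ FX hF] t by simp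
    qed
  qed
  have Pi: "blk_symmetric n (P i)" "blk_posdef n (P i)" "lyapunov_eq n (Ad n (\<gamma> i)) (P i) (Q i)"
          "blk_posdef n (Q i)" if "i \<in> I" for i
  proof -
    have i': "i \<in> {1..m}" using that by (simp add: I_def)
    show "blk_symmetric n (P i)" "blk_posdef n (P i)" "lyapunov_eq n (Ad n (\<gamma> i)) (P i) (Q i)"
      using P_spd i' by blast+
    show "blk_posdef n (Q i)" using Q_spd i' by blast
  qed
  have "\<forall>i\<in>I. \<exists>c>0. \<forall>z. c * (\<Sum>j<n. (norm (z j))^2) \<le> blk_quad n (P i) z"
    using blk_quad_lower[OF Pi(2) n_pos] by blast
  then obtain cP where cP: "\<And>i. i \<in> I \<Longrightarrow> cP i > 0"
      "\<And>i z. i \<in> I \<Longrightarrow> cP i * (\<Sum>j<n. (norm (z j))^2) \<le> blk_quad n (P i) z"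
    by metis
  have "\<forall>i\<in>I. \<exists>c>0. \<forall>z. c * (\<Sum>j<n. (norm (z j))^2) \<le> blk_quad n (Q i) z"
    using blk_quad_lower[OF Pi(4) n_pos] by blast
  then obtain cQ where cQ: "\<And>i. i \<in> I \<Longrightarrow> cQ i > 0"
      "\<And>i z. i \<in> I \<Longrightarrow> cQ i * (\<Sum>j<n. (norm (z j))^2) \<le> blk_quad n (Q i) z"
    by metis
  define ups where "ups = (\<lambda>i t. upsilon n (\<gamma> i) (P i) (\<lambda>j. X i j t))"
  define sv where "sv = (\<lambda>t. \<Sum>i\<in>I. skew (b i t) *v ups i t)"
  define G where "G = Ginv \<Gamma>"
  define W where "W = (\<lambda>t. et t \<bullet> (G *v et t))"
  define Vq where "Vq = (\<lambda>i t. blk_quad n (P i) (\<lambda>j. X i j t))"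
  define V where "V = (\<lambda>t. (\<Sum>i\<in>I. Vq i t) + W t)"
  define Qs where "Qs = (\<lambda>t. \<Sum>i\<in>I. blk_quad n (Q i) (\<lambda>j. X i j t))"
  have det: "(et has_vector_derivative - (\<Gamma> *v sv t)) (at t within {0..})" if t: "t \<ge> 0" for t
  proof -
    have "(\<eta>h has_vector_derivative (\<Gamma> *v sv t)) (at t within {0..})"
      using filt_eta t unfolding sv_def ups_def I_def by blast
    then have "((\<lambda>t. \<eta> - \<eta>h t) has_vector_derivative 0 - (\<Gamma> *v sv t)) (at t within {0..})"
      by (intro has_vector_derivative_diff) auto
    then show ?thesis unfolding et_def by simp
  qed
  have dVq: "(Vq i has_vector_derivative (- blk_quad n (Q i) (\<lambda>j. X i j t) + 2 * (u i t \<bullet> ups i t))) (at t within {0..})"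
    if i: "i \<in> I" and t: "t \<ge> 0" for i t
  proof -
    have h: "(Vq i has_vector_derivative
           (\<Sum>j<n. \<Sum>l<n. zd i j t \<bullet> (P i j l *v X i l t) + X i j t \<bullet> (P i j l *v zd i l t))) (at t within {0..})"
      unfolding Vq_def by (rule vd_blk_quad) (rule dX[OF i _ t])
    have zde: "zd i j t = (\<Sum>p<n. Ad n (\<gamma> i) j p *v X i p t) + Bd n (\<gamma> i) j *v u i t" for j
      by (simp add: zd_def Ad_mv Bd_mv)
    have "(\<Sum>j<n. \<Sum>l<n. zd i j t \<bullet> (P i j l *v X i l t) + X i j t \<bullet> (P i j l *v zd i l t))
        = - blk_quad n (Q i) (\<lambda>j. X i j t) + 2 * (\<Sum>j<n. \<Sum>l<n. (Bd n (\<gamma> i) j *v u i t) \<bullet> (P i j l *v X i l t))"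
      unfolding zde by (rule lyap_ident[OF Pi(1)[OF i] Pi(3)[OF i]])
    also have "\<dots> = - blk_quad n (Q i) (\<lambda>j. X i j t) + 2 * (u i t \<bullet> ups i t)"
      unfolding ups_def ups_inner ..
    finally show ?thesis using h by simp
  qed
  have sv_et: "sv t \<bullet> et t = (\<Sum>i\<in>I. u i t \<bullet> ups i t)" for t
  proof -
    have "sv t \<bullet> et t = (\<Sum>i\<in>I. (b i t \<times> ups i t) \<bullet> et t)"
      unfolding sv_def by (simp add: inner_sum_left skew_mv)
    also have "\<dots> = (\<Sum>i\<in>I. u i t \<bullet> ups i t)"
      unfolding u_def by (intro sum.cong refl) (rule cross_triple[symmetric])
    finally show ?thesis .
  qed
  have Gf: "transpose \<Gamma> ** G = mat 1" "transpose G = G" "\<And>x. 0 \<le> x \<bullet> (G *v x)"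
      "\<And>x. (norm x)^2 \<le> (\<Sum>a\<in>UNIV. \<Gamma>$a$a) * (x \<bullet> (G *v x))"
    unfolding G_def using Ginv_facts[OF Gamma_d] by auto
  have dW: "(W has_vector_derivative (- 2 * (sv t \<bullet> et t))) (at t within {0..})" if t: "t \<ge> 0" for t
  proof -
    have h: "(W has_vector_derivative (et t \<bullet> (G *v - (\<Gamma> *v sv t)) + (- (\<Gamma> *v sv t)) \<bullet> (G *v et t))) (at t within {0..})"
      unfolding W_def by (intro vd_inner vd_mv det[OF t])
    have e1: "et t \<bullet> (G *v y) = y \<bullet> (G *v et t)" for y
    proof -
      have "et t \<bullet> (G *v y) = et t \<bullet> (transpose G *v y)" using Gf(2) by simp
      also have "\<dots> = (G *v et t) \<bullet> y" by (rule inner_transpose)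
      finally show ?thesis by (simp add: inner_commute)
    qed
    have e2: "(\<Gamma> *v sv t) \<bullet> (G *v et t) = sv t \<bullet> et t"
    proof -
      have "(\<Gamma> *v sv t) \<bullet> (G *v et t) = sv t \<bullet> (transpose \<Gamma> *v (G *v et t))"
        by (rule inner_transpose[symmetric])
      also have "\<dots> = sv t \<bullet> et t" by (simp add: matrix_vector_mul_assoc Gf(1))
      finally show ?thesis .
    qed
    have "et t \<bullet> (G *v - (\<Gamma> *v sv t)) + (- (\<Gamma> *v sv t)) \<bullet> (G *v et t) = - 2 * (sv t \<bullet> et t)"
      unfolding e1 using e2 by (simp add: mv_neg)
    then show ?thesis using h by simp
  qed
  have dV: "(V has_real_derivative - Qs t) (at t within {0..})" if t: "t \<ge> 0" for t
  proof -
    have "(V has_vector_derivative (\<Sum>i\<in>I. - blk_quad n (Q i) (\<lambda>j. X i j t) + 2 * (u i t \<bullet> ups i t))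
             + - 2 * (sv t \<bullet> et t)) (at t within {0..})"
      unfolding V_def by (intro has_vector_derivative_add has_vector_derivative_sum dVq dW t)
    moreover have "(\<Sum>i\<in>I. - blk_quad n (Q i) (\<lambda>j. X i j t) + 2 * (u i t \<bullet> ups i t))
             + - 2 * (sv t \<bullet> et t) = - Qs t"
      unfolding sv_et by (simp add: Qs_def sum.distrib sum_negf sum_distrib_left sum_subtractf)
    ultimately show ?thesis by (simp add: has_real_derivative_iff_has_vector_derivative)
  qed
  define Nz where "Nz = (\<lambda>i t. \<Sum>j<n. (norm (X i j t))^2)"
  have Nz_nn: "Nz i t \<ge> 0" for i t unfolding Nz_def by (simp add: sum_nonneg)
  have Vq_ge: "cP i * Nz i t \<le> Vq i t" if "i \<in> I" for i t
    unfolding Nz_def Vq_def using cP(2)[OF that, of "\<lambda>j. X i j t"] by simp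
  have Vq_nn: "Vq i t \<ge> 0" if "i \<in> I" for i t
    using Vq_ge[OF that, of t] cP(1)[OF that] Nz_nn[of i t] by (smt (verit) mult_nonneg_nonneg)
  have W_nn: "W t \<ge> 0" for t unfolding W_def using Gf(3) by blast
  have V_nn: "V t \<ge> 0" for t unfolding V_def using Vq_nn W_nn by (simp add: sum_nonneg)
  have Qs_ge: "(\<Sum>i\<in>I. cQ i * Nz i t) \<le> Qs t" for t
    unfolding Qs_def Nz_def by (intro sum_mono cQ(2))
  have Qs_nn: "Qs t \<ge> 0" for t
  proof -
    have "(\<Sum>i\<in>I. cQ i * Nz i t) \<ge> 0" using cQ(1) Nz_nn by (intro sum_nonneg) (simp add: less_imp_le)
    then show ?thesis using Qs_ge[of t] by linarith
  qed
  have dV': "\<forall>t\<ge>0. (V has_real_derivative - Qs t) (at t within {0..})" using dV by blast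
  have Vmono: "V t \<le> V 0" if t: "t \<ge> 0" for t
  proof -
    obtain z where "V t - V 0 = - Qs z * (t - 0)" using mvt0[OF dV', of 0 t] t by auto
    moreover have "- Qs z * (t - 0) \<le> 0" using Qs_nn[of z] t by (simp add: mult_nonpos_nonneg)
    ultimately show ?thesis by linarith
  qed
  have bX: "bnd (X i j)" if i: "i \<in> I" and j: "j < n" for i j
  proof (rule bndI)
    fix t :: real assume t: "t \<ge> 0"
    have "(norm (X i j t))^2 \<le> Nz i t" unfolding Nz_def
      by (rule member_le_sum[of j "{..<n}" "\<lambda>j. (norm (X i j t))^2", simplified]) (use j in auto)
    then have "cP i * (norm (X i j t))^2 \<le> cP i * Nz i t" using cP(1)[OF i] by simp
    also have "\<dots> \<le> Vq i t" by (rule Vq_ge[OF i])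
    also have "\<dots> \<le> (\<Sum>i\<in>I. Vq i t)" by (rule member_le_sum) (use i finI Vq_nn in auto)
    also have "\<dots> \<le> V 0" using Vmono[OF t] W_nn[of t] unfolding V_def by linarith
    finally have "(norm (X i j t))^2 \<le> V 0 / cP i" using cP(1)[OF i] by (simp add: field_simps)
    then show "norm (X i j t) \<le> sqrt (V 0 / cP i)" by (rule real_le_rsqrt)
  qed
  have bet: "bnd et"
  proof (rule bndI)
    fix t :: real assume t: "t \<ge> 0"
    have "(norm (et t))^2 \<le> (\<Sum>a\<in>UNIV. \<Gamma>$a$a) * W t" unfolding W_def by (rule Gf(4))
    also have "\<dots> \<le> (\<Sum>a\<in>UNIV. \<Gamma>$a$a) * V 0"
    proof (rule mult_left_mono)
      have "(\<Sum>i\<in>I. Vq i t) \<ge> 0" using Vq_nn by (simp add: sum_nonneg)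
      then show "W t \<le> V 0" using Vmono[OF t] unfolding V_def by linarith
      show "0 \<le> (\<Sum>a\<in>UNIV. \<Gamma>$a$a)" using Gamma_d unfolding diag_posdef_def
        by (intro sum_nonneg) (simp add: less_imp_le)
    qed
    finally show "norm (et t) \<le> sqrt ((\<Sum>a\<in>UNIV. \<Gamma>$a$a) * V 0)" by (rule real_le_rsqrt)
  qed
  have rot: "rotation_matrix (R t)" if "t \<ge> 0" for t using attitude that by blast
  have bnorm: "norm (b i t) = norm (r i)" if i: "i \<in> I" and t: "t \<ge> 0" for i t
  proof -
    have "b i t = transpose (R t) *v r i" using meas i t by (simp add: I_def)
    moreover have "orthogonal_matrix (transpose (R t))" using rot[OF t] by (simp add: rotation_matrix_def)
    ultimately show ?thesis using orth_norm[of "transpose (R t)" "r i"] by metis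
  qed
  have bb: "bnd (b i)" if i: "i \<in> I" for i
    by (rule bndI[of _ "norm (r i)"]) (simp add: bnorm[OF i])
  have bw: "bnd \<omega>"
  proof -
    obtain B where B: "\<forall>x\<in>\<omega>m ` {0..}. norm x \<le> B" using gyro_bounded unfolding bounded_iff by blast
    show ?thesis
    proof (rule bndI[of _ "B + norm \<eta>"])
      fix t :: real assume t: "t \<ge> 0"
      have "\<omega> t = \<omega>m t - \<eta>" using gyro t by simp
      moreover have "norm (\<omega>m t) \<le> B" using B t by simp
      ultimately show "norm (\<omega> t) \<le> B + norm \<eta>" using norm_triangle_ineq4[of "\<omega>m t" \<eta>] by simp
    qed
  qed
  have bu: "bnd (u i)" if i: "i \<in> I" for i
    unfolding u_def using bnd_cross[OF bet bb[OF i]] .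
  have bzd: "bnd (zd i j)" if i: "i \<in> I" for i j
  proof -
    have h1: "bnd (\<lambda>t. \<Sum>p<n. companion n (\<gamma> i) j p *\<^sub>R X i p t)"
      by (intro bnd_sum bnd_scaleR bX[OF i]) auto
    have h2: "bnd (\<lambda>t. if j = n - 1 then \<gamma> i n *\<^sub>R u i t else 0)"
      by (cases "j = n - 1") (simp_all add: bnd_scaleR bu[OF i] bnd_const)
    show ?thesis unfolding zd_def using bnd_add[OF h1 h2] by simp
  qed
  define N where "N = (\<lambda>t. \<Sum>i\<in>I. cQ i * Nz i t)"
  define N' where "N' = (\<lambda>t. \<Sum>i\<in>I. cQ i * (\<Sum>j<n. 2 * (X i j t \<bullet> zd i j t)))"
  have N_nn: "\<forall>t\<ge>0. N t \<ge> 0"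
    unfolding N_def using cQ(1) Nz_nn by (auto intro!: sum_nonneg simp: less_imp_le)
  have dN: "\<forall>t\<ge>0. (N has_vector_derivative N' t) (at t within {0..})"
  proof (intro allI impI)
    fix t :: real assume t: "t \<ge> 0"
    have sq: "((\<lambda>t. (norm (X i j t))^2) has_vector_derivative 2 * (X i j t \<bullet> zd i j t)) (at t within {0..})"
      if i: "i \<in> I" and j: "j < n" for i j
    proof -
      have "((\<lambda>t. X i j t \<bullet> X i j t) has_vector_derivative (X i j t \<bullet> zd i j t + zd i j t \<bullet> X i j t)) (at t within {0..})"
        by (intro vd_inner dX[OF i j t])
      then show ?thesis by (simp add: power2_norm_eq_inner inner_commute)
    qed
    show "(N has_vector_derivative N' t) (at t within {0..})"
      unfolding N_def N'_def Nz_def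
      by (intro has_vector_derivative_sum has_vector_derivative_mult_right sq) auto
  qed
  have bN': "bnd N'"
    unfolding N'_def
    by (intro bnd_sum bnd_mult bnd_const bnd_inner bX bzd finI) auto
  obtain BN where BN: "\<And>t. t \<ge> 0 \<Longrightarrow> norm (N' t) \<le> BN" using bN' by (metis bndE)
  have lipN: "\<forall>s\<ge>0. \<forall>t\<ge>0. \<bar>N s - N t\<bar> \<le> BN * \<bar>s - t\<bar>"
    using lip0[OF dN] BN by (simp add: real_norm_def)
  have dVle: "\<forall>t\<ge>0. - Qs t \<le> - 1 * N t" using Qs_ge unfolding N_def by simp
  have N_lim: "(N \<longlongrightarrow> 0) at_top"
    by (rule barbalat1[OF dV' _ dVle _ N_nn lipN]) (use V_nn in auto)
  have X_lim: "(X i j \<longlongrightarrow> 0) at_top" if i: "i \<in> I" and j: "j < n" for i j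
  proof (rule Lim_null_comparison)
    have "norm (X i j t) \<le> sqrt (N t / cQ i)" for t
    proof -
      have "(norm (X i j t))^2 \<le> Nz i t" unfolding Nz_def
        by (rule member_le_sum[of j "{..<n}" "\<lambda>j. (norm (X i j t))^2", simplified]) (use j in auto)
      then have "cQ i * (norm (X i j t))^2 \<le> cQ i * Nz i t" using cQ(1)[OF i] by simp
      also have "\<dots> \<le> N t" unfolding N_def
        by (rule member_le_sum) (use i finI cQ(1) Nz_nn in \<open>auto simp: less_imp_le\<close>)
      finally have "(norm (X i j t))^2 \<le> N t / cQ i" using cQ(1)[OF i] by (simp add: field_simps)
      then show ?thesis by (rule real_le_rsqrt)
    qed
    then show "eventually (\<lambda>t. norm (X i j t) \<le> sqrt (N t / cQ i)) at_top" by simp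
    have "((\<lambda>t. sqrt (N t / cQ i)) \<longlongrightarrow> sqrt (0 / cQ i)) at_top"
      by (intro tendsto_intros N_lim) (use cQ(1)[OF i] in simp)
    then show "((\<lambda>t. sqrt (N t / cQ i)) \<longlongrightarrow> 0) at_top" by simp
  qed
  have bt_lim: "(bt i \<longlongrightarrow> 0) at_top" if i: "i \<in> I" for i
  proof -
    have i': "i \<in> {1..m}" using i by (simp add: I_def)
    define F where "F = (\<lambda>t. (1 / \<gamma> i n) *\<^sub>R (X i (n - 1) t + (\<Sum>k=1..n-1. \<gamma> i k *\<^sub>R X i (n - k - 1) t)))"
    have "(F \<longlongrightarrow> (1 / \<gamma> i n) *\<^sub>R (0 + (\<Sum>k=1..n-1. \<gamma> i k *\<^sub>R 0))) at_top"
      unfolding F_def using n_pos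
      by (intro tendsto_intros X_lim[OF i]) auto
    then have F0: "(F \<longlongrightarrow> 0) at_top" by simp
    have "eventually (\<lambda>t. F t = bt i t) at_top"
    proof -
      have "F t = bt i t" if t: "t \<ge> 0" for t
      proof -
        have "X i (n - 1) t = - (\<Sum>k=1..n-1. \<gamma> i k *\<^sub>R X i (n - k - 1) t) + \<gamma> i n *\<^sub>R (b i t - bh i t)"
          using filt_xn i' t by blast
        then have "X i (n - 1) t + (\<Sum>k=1..n-1. \<gamma> i k *\<^sub>R X i (n - k - 1) t) = \<gamma> i n *\<^sub>R bt i t"
          by (simp add: bt_def)
        then show ?thesis using gn[OF i] by (simp add: F_def)
      qed
      then show ?thesis using eventually_ge_at_top[of 0] by (rule eventually_mono[rotated]) 
    qed
    then show ?thesis using F0 by (rule Lim_transform_eventually[rotated])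
  qed
  have bups: "bnd (ups i)" if i: "i \<in> I" for i
    unfolding ups_def upsilon_def by (intro bnd_sum bnd_mv bX[OF i]) auto
  have bsv: "bnd sv"
    unfolding sv_def skew_mv by (intro bnd_sum bnd_cross bb bups finI)
  have u_lim: "(u i \<longlongrightarrow> 0) at_top" if i: "i \<in> I" for i
  proof -
    have jn: "n - 1 < n" using n_pos by simp
    define g' where "g' = (\<lambda>t. (\<Sum>p<n. companion n (\<gamma> i) (n - 1) p *\<^sub>R zd i p t)
        + \<gamma> i n *\<^sub>R (et t \<times> (- (\<omega> t \<times> b i t)) + (- (\<Gamma> *v sv t)) \<times> b i t))"
    have zdn: "zd i (n - 1) = (\<lambda>t. (\<Sum>p<n. companion n (\<gamma> i) (n - 1) p *\<^sub>R X i p t) + \<gamma> i n *\<^sub>R (et t \<times> b i t))"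
      by (simp add: zd_def u_def)
    have dg: "\<forall>t\<ge>0. (zd i (n - 1) has_vector_derivative g' t) (at t within {0..})"
    proof (intro allI impI)
      fix t :: real assume t: "t \<ge> 0"
      have h1: "((\<lambda>t. \<Sum>p<n. companion n (\<gamma> i) (n - 1) p *\<^sub>R X i p t) has_vector_derivative
                 (\<Sum>p<n. companion n (\<gamma> i) (n - 1) p *\<^sub>R zd i p t)) (at t within {0..})"
        by (intro has_vector_derivative_sum bounded_linear.has_vector_derivative[OF bounded_linear_scaleR_right] dX[OF i _ t]) auto
      have h2: "((\<lambda>t. \<gamma> i n *\<^sub>R (et t \<times> b i t)) has_vector_derivative
                 \<gamma> i n *\<^sub>R (et t \<times> (- (\<omega> t \<times> b i t)) + (- (\<Gamma> *v sv t)) \<times> b i t)) (at t within {0..})"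
        by (intro bounded_linear.has_vector_derivative[OF bounded_linear_scaleR_right] vd_cross det[OF t] db[OF i t])
      show "(zd i (n - 1) has_vector_derivative g' t) (at t within {0..})"
        unfolding zdn g'_def by (rule has_vector_derivative_add[OF h1 h2])
    qed
    have bg: "bnd g'"
      unfolding g'_def
      by (intro bnd_add bnd_sum bnd_scaleR bzd[OF i] bnd_cross bet bnd_minus bw bb[OF i] bnd_mv bsv) auto
    obtain Bg where Bg: "\<And>t. t \<ge> 0 \<Longrightarrow> norm (g' t) \<le> Bg" using bg by (metis bndE)
    have lipg: "\<forall>s\<ge>0. \<forall>t\<ge>0. norm (zd i (n - 1) s - zd i (n - 1) t) \<le> Bg * \<bar>s - t\<bar>"
      using lip0[OF dg] Bg by blast
    have dXn: "\<forall>t\<ge>0. (X i (n - 1) has_vector_derivative zd i (n - 1) t) (at t within {0..})"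
      using dX[OF i jn] by blast
    have zd_lim: "(zd i (n - 1) \<longlongrightarrow> 0) at_top"
      by (rule barbalat2[OF dXn X_lim[OF i jn] lipg])
    have ue: "u i = (\<lambda>t. (1 / \<gamma> i n) *\<^sub>R (zd i (n - 1) t - (\<Sum>p<n. companion n (\<gamma> i) (n - 1) p *\<^sub>R X i p t)))"
      unfolding zdn u_def using gn[OF i] by (simp add: algebra_simps)
    have "((\<lambda>t. (1 / \<gamma> i n) *\<^sub>R (zd i (n - 1) t - (\<Sum>p<n. companion n (\<gamma> i) (n - 1) p *\<^sub>R X i p t)))
            \<longlongrightarrow> (1 / \<gamma> i n) *\<^sub>R (0 - (\<Sum>p<n. companion n (\<gamma> i) (n - 1) p *\<^sub>R 0))) at_top"
      by (intro tendsto_intros zd_lim X_lim[OF i]) auto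
    then show ?thesis unfolding ue by simp
  qed
  obtain i0 j0 where i0: "i0 \<in> I" "j0 \<in> I" and nc: "\<forall>t\<ge>0. \<not> collinear {0, b i0 t, b j0 t}"
    using noncollinear unfolding I_def by blast
  have ncr: "\<not> collinear {0, r i0, r j0}"
  proof
    assume col: "collinear {0, r i0, r j0}"
    define M where "M = transpose (R 0)"
    have bi: "b i0 0 = M *v r i0" "b j0 0 = M *v r j0"
      using meas i0 unfolding M_def I_def by auto
    have "collinear {0, M *v r i0, M *v r j0}"
    proof -
      have "r i0 = 0 \<or> r j0 = 0 \<or> (\<exists>c. r j0 = c *\<^sub>R r i0)" using col by (simp add: collinear_lemma)
      then have "M *v r i0 = 0 \<or> M *v r j0 = 0 \<or> (\<exists>c. M *v r j0 = c *\<^sub>R (M *v r i0))"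
        by (auto simp: matrix_scaleR_vector_ac scaleR_matrix_vector_assoc)
      then show ?thesis by (simp add: collinear_lemma)
    qed
    then show False using nc bi by auto
  qed
  obtain c where c: "c > 0" "\<And>v. c * norm v \<le> norm (v \<times> r i0) + norm (v \<times> r j0)"
    using cross_lower[OF ncr] by blast
  have et_lim: "(et \<longlongrightarrow> 0) at_top"
  proof (rule Lim_null_comparison)
    have "norm (et t) \<le> (norm (u i0 t) + norm (u j0 t)) / c" if t: "t \<ge> 0" for t
    proof -
      have o: "orthogonal_matrix (R t)" using rot[OF t] by (simp add: rotation_matrix_def)
      have "norm (u i t) = norm ((R t *v et t) \<times> r i)" if "i \<in> I" for i
      proof -
        have "b i t = transpose (R t) *v r i" using meas that t by (simp add: I_def)
        then show ?thesis unfolding u_def using cross_rot[OF rot[OF t]] by simp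
      qed
      then have "c * norm (R t *v et t) \<le> norm (u i0 t) + norm (u j0 t)" using c(2) i0 by simp
      then show ?thesis using orth_norm[OF o] c(1) by (simp add: field_simps)
    qed
    then show "eventually (\<lambda>t. norm (et t) \<le> (norm (u i0 t) + norm (u j0 t)) / c) at_top"
      using eventually_ge_at_top[of 0] by (rule eventually_mono[rotated]) 
    have "((\<lambda>t. (norm (u i0 t) + norm (u j0 t)) / c) \<longlongrightarrow> (norm (0::real^3) + norm (0::real^3)) / c) at_top"
      using c(1) by (intro tendsto_intros u_lim i0) simp
    then show "((\<lambda>t. (norm (u i0 t) + norm (u j0 t)) / c) \<longlongrightarrow> 0) at_top" by simp
  qed
  show ?thesis
    using bt_lim et_lim unfolding bt_def et_def I_def by blast
qed


end
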